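(* Let $D$ be finite or countably infinite, let $(\rho^0_{kl})_{k,l=1}^D$ be the matrix of a density operator (positive semidefinite, trace one) in some orthonormal basis, and let $(U_{mn})_{m,n=1}^D$ be a unitary matrix. Define $\mu_n=\sum_k|U_{nk}|^2\rho^0_{kk}$, $$\nu_{mn}=\sum_{k\neq l}U_{mk}U_{ml}^*U_{nk}^*U_{nl}|\rho^0_{kl}|^2,\qquad \tilde\nu_{mn}=\sum_{k,l}U_{mk}U_{ml}^*U_{nk}^*U_{nl}|\rho^0_{kl}|^2 .$$ Then for all $m,n$, $\nu_{mn}\le\tilde\nu_{mn}\le\mu_m\mu_n$.
   Context: The quantities $\nu_{mn}$ and $\tilde\nu_{mn}$ are real numbers (each sum is invariant under complex conjugation combined with exchanging $k$ and $l$). *)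

theory Defs
  imports "HOL-Analysis.Analysis"
begin

text \<open>Matrices indexed by a countable type 'a (finite or countably infinite D).\<close>

definition density_matrix :: "('a \<Rightarrow> 'a \<Rightarrow> complex) \<Rightarrow> bool" where
  "density_matrix \<rho> \<longleftrightarrow>
     (\<forall>k l. \<rho> l k = cnj (\<rho> k l)) \<and>
     (\<forall>S x. finite S \<longrightarrow> 0 \<le> Re (\<Sum>k\<in>S. \<Sum>l\<in>S. cnj (x k) * \<rho> k l * x l)) \<and>
     ((\<lambda>k. \<rho> k k) has_sum 1) UNIV"

definition unitary_matrix :: "('a \<Rightarrow> 'a \<Rightarrow> complex) \<Rightarrow> bool" where
  "unitary_matrix U \<longleftrightarrow>
     (\<forall>m n. ((\<lambda>k. U m k * cnj (U n k)) has_sum (if m = n then 1 else 0)) UNIV) \<and>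
     (\<forall>m n. ((\<lambda>k. cnj (U k m) * U k n) has_sum (if m = n then 1 else 0)) UNIV)"

definition mu :: "('a \<Rightarrow> 'a \<Rightarrow> complex) \<Rightarrow> ('a \<Rightarrow> 'a \<Rightarrow> complex) \<Rightarrow> 'a \<Rightarrow> real" where
  "mu U \<rho> n = (\<Sum>\<^sub>\<infinity>k. (cmod (U n k))\<^sup>2 * Re (\<rho> k k))"

definition nu_term :: "('a \<Rightarrow> 'a \<Rightarrow> complex) \<Rightarrow> ('a \<Rightarrow> 'a \<Rightarrow> complex) \<Rightarrow> 'a \<Rightarrow> 'a \<Rightarrow> 'a \<times> 'a \<Rightarrow> complex" where
  "nu_term U \<rho> m n p = (case p of (k, l) \<Rightarrow>
     U m k * cnj (U m l) * cnj (U n k) * U n l * complex_of_real ((cmod (\<rho> k l))\<^sup>2))"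

definition nu :: "('a \<Rightarrow> 'a \<Rightarrow> complex) \<Rightarrow> ('a \<Rightarrow> 'a \<Rightarrow> complex) \<Rightarrow> 'a \<Rightarrow> 'a \<Rightarrow> complex" where
  "nu U \<rho> m n = infsum (nu_term U \<rho> m n) {(k, l). k \<noteq> l}"

definition nu_tilde :: "('a \<Rightarrow> 'a \<Rightarrow> complex) \<Rightarrow> ('a \<Rightarrow> 'a \<Rightarrow> complex) \<Rightarrow> 'a \<Rightarrow> 'a \<Rightarrow> complex" where
  "nu_tilde U \<rho> m n = infsum (nu_term U \<rho> m n) UNIV"

end

theory Submission
  imports Defs
begin

lemma prod_has_sum:
  fixes f g :: "'a \<Rightarrow> real"
  assumes f0: "\<And>k. 0 \<le> f k" and g0: "\<And>k. 0 \<le> g k"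
    and F: "(f has_sum F) UNIV" and G: "(g has_sum G) UNIV"
  shows "((\<lambda>(k,l). f k * g l) has_sum (F * G)) UNIV"
proof -
  have U: "(UNIV :: ('a\<times>'a) set) = Sigma UNIV (\<lambda>_. UNIV)" by simp
  have inner: "\<And>k. ((\<lambda>l. f k * g l) has_sum (f k * G)) UNIV"
    using G by (rule has_sum_cmult_right)
  have outer: "((\<lambda>k. f k * G) has_sum (F * G)) UNIV"
    using F by (rule has_sum_cmult_left)
  have "(\<lambda>p. norm ((\<lambda>(k,l). f k * g l) p)) summable_on Sigma UNIV (\<lambda>_. UNIV)"
  proof (subst Infinite_Sum.abs_summable_on_Sigma_iff, intro conjI ballI)
    fix k :: 'a
    show "(\<lambda>l. norm ((\<lambda>(k,l). f k * g l) (k, l))) summable_on UNIV"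
      using inner[of k] f0[of k] g0 by (auto simp: abs_mult summable_on_def)
  next
    have G0: "0 \<le> G" using G g0 by (rule has_sum_nonneg)
    have e: "\<And>k. (\<Sum>\<^sub>\<infinity>l. norm ((\<lambda>(k,l). f k * g l) (k, l))) = f k * G"
      using inner f0 g0 by (simp add: abs_mult infsumI)
    have "(\<lambda>k. norm (\<Sum>\<^sub>\<infinity>l\<in>UNIV. norm ((\<lambda>(k,l). f k * g l) (k, l)))) = (\<lambda>k. f k * G)"
      using e f0 G0 by (simp add: abs_mult)
    then show "(\<lambda>k. norm (\<Sum>\<^sub>\<infinity>l\<in>UNIV. norm ((\<lambda>(k,l). f k * g l) (k, l)))) summable_on UNIV"
      using outer unfolding summable_on_def by auto
  qed
  then have "(\<lambda>p. norm ((\<lambda>(k,l). f k * g l) p)) summable_on UNIV"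
    using U by simp
  then have S: "(\<lambda>(k,l). f k * g l) summable_on UNIV"
    by (rule abs_summable_summable)
  have "infsum (\<lambda>(k,l). f k * g l) UNIV = infsum (\<lambda>k. infsum (\<lambda>l. f k * g l) UNIV) UNIV"
    using infsum_Sigma_banach[of "\<lambda>(k,l). f k * g l" UNIV "\<lambda>_. UNIV"] S U by simp
  also have "\<dots> = infsum (\<lambda>k. f k * G) UNIV" by (intro infsum_cong infsumI inner)
  also have "\<dots> = F * G" by (rule infsumI[OF outer])
  finally show ?thesis using S by (metis has_sum_infsum)
qed

lemma ring_aux: fixes t d a b c :: complex
  shows "- t * d * b * (- t * a) + - t * d * a + (d * (- t * a) + c) = t * t * (d * a) * b - 2 * t * (d * a) + c"
  by algebra

lemma re_aux: "Re (complex_of_real a * complex_of_real b * z - 2 * complex_of_real t * complex_of_real b + w) = a * b * Re z + Re w - 2 * t * b"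
  by simp

lemma psd_form:
  assumes "density_matrix \<rho>" "finite S"
  shows "0 \<le> Re (\<Sum>k\<in>S. \<Sum>l\<in>S. cnj (x k) * \<rho> k l * x l)"
proof -
  have "\<forall>S x. finite S \<longrightarrow> 0 \<le> Re (\<Sum>k\<in>S. \<Sum>l\<in>S. cnj (x k) * \<rho> k l * x l)"
    using assms(1) unfolding density_matrix_def by (rule conjunct1[OF conjunct2])
  then show ?thesis using assms(2) by simp
qed

lemma psd_diag:
  assumes "density_matrix \<rho>"
  shows "0 \<le> Re (\<rho> k k)"
proof -
  have "0 \<le> Re (\<Sum>i\<in>{k}. \<Sum>j\<in>{k}. cnj ((\<lambda>_. 1::complex) i) * \<rho> i j * (\<lambda>_. 1) j)"
    using psd_form[OF assms, of "{k}" "\<lambda>_. 1"] by simp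
  then show ?thesis by simp
qed

lemma psd_offdiag:
  assumes "density_matrix \<rho>"
  shows "(cmod (\<rho> k l))\<^sup>2 \<le> Re (\<rho> k k) * Re (\<rho> l l)"
proof (cases "k = l")
  case True
  from assms have "\<rho> k k = cnj (\<rho> k k)" unfolding density_matrix_def by metis
  then have "Im (\<rho> k k) = Im (cnj (\<rho> k k))" by simp
  then have "Im (\<rho> k k) = 0" by simp
  then have "(cmod (\<rho> k k))\<^sup>2 = (Re (\<rho> k k))\<^sup>2" by (simp add: cmod_power2)
  then show ?thesis using True by (simp add: power2_eq_square)
next
  case False
  define c where "c = (cmod (\<rho> k l))\<^sup>2"
  have herm: "\<rho> l k = cnj (\<rho> k l)" using assms unfolding density_matrix_def by metis
  have h: "0 \<le> s\<^sup>2 * c * Re (\<rho> k k) + Re (\<rho> l l) - 2 * s * c" for s :: real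
  proof -
    define x where "x = (\<lambda>j. if j = k then - complex_of_real s * \<rho> k l else if j = l then 1 else 0)"
    have "0 \<le> Re (\<Sum>i\<in>{k,l}. \<Sum>j\<in>{k,l}. cnj (x i) * \<rho> i j * x j)"
      by (rule psd_form[OF assms]) simp
    also have "\<dots> = s\<^sup>2 * c * Re (\<rho> k k) + Re (\<rho> l l) - 2 * s * c"
    proof -
      have zz: "cnj (\<rho> k l) * \<rho> k l = complex_of_real c"
        unfolding c_def by (subst complex_norm_square) (rule mult.commute)
      have "(\<Sum>i\<in>{k,l}. \<Sum>j\<in>{k,l}. cnj (x i) * \<rho> i j * x j)
         = complex_of_real (s\<^sup>2) * (cnj (\<rho> k l) * \<rho> k l) * \<rho> k k
           - 2 * complex_of_real s * (cnj (\<rho> k l) * \<rho> k l) + \<rho> l l"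
      proof -
        have "(\<Sum>i\<in>{k,l}. \<Sum>j\<in>{k,l}. cnj (x i) * \<rho> i j * x j)
           = cnj (x k) * \<rho> k k * x k + cnj (x k) * \<rho> k l * x l + (cnj (x l) * \<rho> l k * x k + cnj (x l) * \<rho> l l * x l)"
          using False by (simp add: sum.insert)
        moreover have xk: "x k = - complex_of_real s * \<rho> k l" and xl: "x l = 1" using False unfolding x_def by auto
        ultimately show ?thesis unfolding herm xk xl
          apply (simp only: complex_cnj_mult complex_cnj_minus complex_cnj_complex_of_real complex_cnj_one mult_1_right mult_1_left)
          apply (simp only: power2_eq_square of_real_mult)
          by (rule ring_aux)
      qed
      then have "(\<Sum>i\<in>{k,l}. \<Sum>j\<in>{k,l}. cnj (x i) * \<rho> i j * x j)
         = complex_of_real (s\<^sup>2) * complex_of_real c * \<rho> k k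
           - 2 * complex_of_real s * complex_of_real c + \<rho> l l" unfolding zz .
      then show ?thesis by (simp only: re_aux)
    qed
    finally show ?thesis .
  qed
  have c0: "0 \<le> c" unfolding c_def by simp
  have rk: "0 \<le> Re (\<rho> k k)" and rl: "0 \<le> Re (\<rho> l l)" using psd_diag[OF assms] by auto
  show ?thesis
  proof (cases "Re (\<rho> k k) = 0")
    case True
    have "c \<le> 0"
    proof (rule ccontr)
      assume "\<not> c \<le> 0"
      then have cp: "0 < c" by simp
      have "0 \<le> ((Re (\<rho> l l) + 1) / (2 * c))\<^sup>2 * c * Re (\<rho> k k) + Re (\<rho> l l) - 2 * ((Re (\<rho> l l) + 1) / (2 * c)) * c"
        by (rule h)
      also have "\<dots> = -1" using True cp by simp (simp add: field_simps)
      finally show False by simp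
    qed
    then have "c = 0" using c0 by simp
    then show ?thesis using True unfolding c_def by simp
  next
    case False
    then have rp: "0 < Re (\<rho> k k)" using rk by simp
    have "0 \<le> (1 / Re (\<rho> k k))\<^sup>2 * c * Re (\<rho> k k) + Re (\<rho> l l) - 2 * (1 / Re (\<rho> k k)) * c"
      by (rule h)
    also have "\<dots> = Re (\<rho> l l) - c / Re (\<rho> k k)" using rp by (simp add: field_simps power2_eq_square)
    finally have "c / Re (\<rho> k k) \<le> Re (\<rho> l l)" by simp
    then have "c \<le> Re (\<rho> l l) * Re (\<rho> k k)" using rp by (simp add: pos_divide_le_eq)
    then show ?thesis unfolding c_def by (simp add: mult.commute)
  qed
qed


lemma amgm:
  fixes a b d e c x y :: real
  assumes "0 \<le> a" "0 \<le> b" "0 \<le> d" "0 \<le> e" "0 \<le> c" "c \<le> x * y" "0 \<le> x" "0 \<le> y"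
  shows "a * b * d * e * c \<le> ((a\<^sup>2 * x) * (e\<^sup>2 * y) + (d\<^sup>2 * x) * (b\<^sup>2 * y)) / 2"
proof -
  have abde: "0 \<le> a * b * d * e" using assms by simp
  have "a * b * d * e * c \<le> a * b * d * e * (x * y)" using assms(6) abde by (rule mult_left_mono)
  also have "\<dots> = ((a * e) * (d * b)) * (x * y)" by (simp add: ac_simps)
  also have "\<dots> \<le> (((a * e)\<^sup>2 + (d * b)\<^sup>2) / 2) * (x * y)"
  proof (rule mult_right_mono)
    have "0 \<le> (a * e - d * b)\<^sup>2" by simp
    then show "a * e * (d * b) \<le> ((a * e)\<^sup>2 + (d * b)\<^sup>2) / 2" by (simp add: power2_diff)
  qed (use assms in simp)
  also have "\<dots> = ((a\<^sup>2 * x) * (e\<^sup>2 * y) + (d\<^sup>2 * x) * (b\<^sup>2 * y)) / 2"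
    by (simp add: power_mult_distrib algebra_simps)
  finally show ?thesis .
qed

lemma infsum_swap_Im:
  fixes f :: "'a \<times> 'a \<Rightarrow> complex"
  assumes f: "\<And>k l. f (l, k) = cnj (f (k, l))" and A: "\<And>k l. (k, l) \<in> A \<Longrightarrow> (l, k) \<in> A"
  shows "Im (infsum f A) = 0"
proof -
  have As: "prod.swap q \<in> A" if "q \<in> A" for q
  proof (cases q)
    case (Pair k l)
    then show ?thesis using A[of k l] that by simp
  qed
  have "infsum (\<lambda>p. f (prod.swap p)) A = infsum f A"
    by (rule infsum_reindex_bij_witness[where i = prod.swap and j = prod.swap]) (simp_all add: As)
  moreover have "(\<lambda>p. f (prod.swap p)) = (\<lambda>p. cnj (f p))"
  proof (rule ext)
    fix q :: "'a \<times> 'a"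
    obtain k l where q: "q = (k, l)" by (cases q)
    show "f (prod.swap q) = cnj (f q)" unfolding q swap_simp by (rule f)
  qed
  ultimately have "cnj (infsum f A) = infsum f A" by simp
  then have "Im (cnj (infsum f A)) = Im (infsum f A)" by simp
  then show ?thesis by simp
qed

theorem lemma2:
  fixes \<rho> U :: "'a::countable \<Rightarrow> 'a \<Rightarrow> complex" and m n :: 'a
  assumes "density_matrix \<rho>" and "unitary_matrix U"
  shows "Im (nu U \<rho> m n) = 0 \<and> Im (nu_tilde U \<rho> m n) = 0 \<and>
         Re (nu U \<rho> m n) \<le> Re (nu_tilde U \<rho> m n) \<and>
         Re (nu_tilde U \<rho> m n) \<le> mu U \<rho> m * mu U \<rho> n"
proof -
  define r where "r k = Re (\<rho> k k)" for k
  define t where "t = nu_term U \<rho> m n"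
  have herm: "\<And>k l. \<rho> l k = cnj (\<rho> k l)" using assms(1) unfolding density_matrix_def by metis
  have r0: "\<And>k. 0 \<le> r k" unfolding r_def using psd_diag[OF assms(1)] .
  have "((\<lambda>k. \<rho> k k) has_sum 1) UNIV" using assms(1) unfolding density_matrix_def by metis
  then have rsum: "(r has_sum 1) UNIV" unfolding r_def using has_sum_Re by fastforce
  have usum: "((\<lambda>k. (cmod (U j k))\<^sup>2) has_sum 1) UNIV" for j
  proof -
    have "((\<lambda>k. U j k * cnj (U j k)) has_sum 1) UNIV"
      using assms(2) unfolding unitary_matrix_def by (metis (full_types))
    then have "((\<lambda>k. Re (U j k * cnj (U j k))) has_sum Re 1) UNIV" by (rule has_sum_Re)
    moreover have "\<And>k. Re (U j k * cnj (U j k)) = (cmod (U j k))\<^sup>2"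
      by (metis Re_complex_of_real complex_norm_square)
    ultimately show ?thesis by simp
  qed
  have u1: "(cmod (U j k))\<^sup>2 \<le> 1" for j k
  proof -
    have "((\<lambda>k. (cmod (U j k))\<^sup>2) has_sum (sum (\<lambda>k. (cmod (U j k))\<^sup>2) {k})) {k}"
      by (rule has_sum_finite) simp
    from has_sum_mono'[OF this usum[of j]] show ?thesis by simp
  qed
  define p where "p j k = (cmod (U j k))\<^sup>2 * r k" for j k
  have p0: "0 \<le> p j k" for j k unfolding p_def using r0 by simp
  have psum: "(p j has_sum mu U \<rho> j) UNIV" for j
  proof -
    have "p j summable_on UNIV"
    proof (rule summable_on_comparison_test)
      show "r summable_on UNIV" using rsum summable_on_def by blast
      show "p j x \<le> r x" for x unfolding p_def using u1[of j x] r0[of x]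
        by (simp add: mult_left_le_one_le)
      show "0 \<le> p j x" for x by (rule p0)
    qed
    moreover have "mu U \<rho> j = infsum (p j) UNIV" unfolding mu_def p_def r_def by simp
    ultimately show ?thesis by (simp add: has_sum_infsum)
  qed
  define G where "G = (\<lambda>(k, l). (p m k * p n l + p n k * p m l) / 2)"
  have Gsum: "(G has_sum mu U \<rho> m * mu U \<rho> n) UNIV"
  proof -
    have P: "((\<lambda>(k,l). p m k * p n l) has_sum mu U \<rho> m * mu U \<rho> n) UNIV"
      by (rule prod_has_sum[OF p0 p0 psum psum])
    have Q: "((\<lambda>(k,l). p n k * p m l) has_sum mu U \<rho> n * mu U \<rho> m) UNIV"
      by (rule prod_has_sum[OF p0 p0 psum psum])
    have "((\<lambda>x. (\<lambda>(k,l). p m k * p n l) x + (\<lambda>(k,l). p n k * p m l) x) has_sum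
           (mu U \<rho> m * mu U \<rho> n + mu U \<rho> n * mu U \<rho> m)) UNIV"
      by (rule has_sum_add[OF P Q])
    then have "((\<lambda>x. ((\<lambda>(k,l). p m k * p n l) x + (\<lambda>(k,l). p n k * p m l) x) * (1/2)) has_sum
           ((mu U \<rho> m * mu U \<rho> n + mu U \<rho> n * mu U \<rho> m) * (1/2))) UNIV"
      by (rule has_sum_cmult_left)
    moreover have "(\<lambda>x. ((\<lambda>(k,l). p m k * p n l) x + (\<lambda>(k,l). p n k * p m l) x) * (1/2)) = G"
      unfolding G_def by (auto simp: fun_eq_iff)
    ultimately show ?thesis by (simp add: algebra_simps)
  qed
  have tbound: "norm (t x) \<le> G x" for x
  proof (cases x)
    case (Pair k l)
    have c: "(cmod (\<rho> k l))\<^sup>2 \<le> r k * r l" unfolding r_def by (rule psd_offdiag[OF assms(1)])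
    have "norm (t x) = cmod (U m k) * cmod (U m l) * cmod (U n k) * cmod (U n l) * (cmod (\<rho> k l))\<^sup>2"
      unfolding t_def nu_term_def Pair by (simp add: norm_mult norm_power)
    also have "\<dots> \<le> (((cmod (U m k))\<^sup>2 * r k) * ((cmod (U n l))\<^sup>2 * r l) + ((cmod (U n k))\<^sup>2 * r k) * ((cmod (U m l))\<^sup>2 * r l)) / 2"
      by (rule amgm) (use c r0 in auto)
    also have "\<dots> = G x" unfolding G_def p_def Pair by simp
    finally show ?thesis .
  qed
  have tabs: "(\<lambda>x. norm (t x)) summable_on UNIV"
  proof (rule summable_on_comparison_test)
    show "G summable_on UNIV" using Gsum summable_on_def by blast
    show "norm (t x) \<le> G x" for x by (rule tbound)
  qed simp
  have tsum: "t summable_on UNIV" using tabs by (rule abs_summable_summable)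
  have tswap: "t (l, k) = cnj (t (k, l))" for k l
    unfolding t_def nu_term_def using herm[of l k] by (simp add: ac_simps)
  define D where "D = {(k, l). k \<noteq> (l::'a)}"
  define E where "E = {(k, l). k = (l::'a)}"
  have nu_eq: "nu U \<rho> m n = infsum t D" unfolding nu_def t_def D_def by simp
  have nut_eq: "nu_tilde U \<rho> m n = infsum t UNIV" unfolding nu_tilde_def t_def by simp
  have Im1: "Im (nu U \<rho> m n) = 0"
    unfolding nu_eq by (rule infsum_swap_Im[where f=t, OF tswap]) (auto simp: D_def)
  have Im2: "Im (nu_tilde U \<rho> m n) = 0"
    unfolding nut_eq by (rule infsum_swap_Im[where f=t, OF tswap]) auto
  have split: "infsum t UNIV = infsum t D + infsum t E"
  proof -
    have "UNIV = D \<union> E" unfolding D_def E_def by auto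
    moreover have "infsum t (D \<union> E) = infsum t D + infsum t E"
      by (rule infsum_Un_disjoint) (auto simp: D_def E_def intro: summable_on_subset_banach[OF tsum])
    ultimately show ?thesis by simp
  qed
  have Epos: "0 \<le> Re (infsum t E)"
  proof -
    have "t (k, k) = complex_of_real ((cmod (U m k))\<^sup>2 * (cmod (U n k))\<^sup>2 * (cmod (\<rho> k k))\<^sup>2)" for k
    proof -
      have "t (k, k) = (U m k * cnj (U m k)) * (U n k * cnj (U n k)) * complex_of_real ((cmod (\<rho> k k))\<^sup>2)"
        unfolding t_def nu_term_def by (simp add: ac_simps)
      then show ?thesis by (simp only: complex_norm_square[symmetric] of_real_mult)
    qed
    then have "\<And>x. x \<in> E \<Longrightarrow> 0 \<le> Re (t x)" unfolding E_def by auto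
    then have "0 \<le> infsum (\<lambda>x. Re (t x)) E" by (rule infsum_nonneg)
    also have "\<dots> = Re (infsum t E)"
      by (rule infsum_Re) (rule summable_on_subset_banach[OF tsum], simp)
    finally show ?thesis .
  qed
  have le1: "Re (nu U \<rho> m n) \<le> Re (nu_tilde U \<rho> m n)"
    unfolding nu_eq nut_eq split using Epos by simp
  have "norm (infsum t UNIV) \<le> mu U \<rho> m * mu U \<rho> n"
    by (rule norm_infsum_le[OF has_sum_infsum[OF tsum] Gsum]) (rule tbound)
  then have le2: "Re (nu_tilde U \<rho> m n) \<le> mu U \<rho> m * mu U \<rho> n"
    unfolding nut_eq using complex_Re_le_cmod order_trans by blast
  show ?thesis using Im1 Im2 le1 le2 by blast
qed

end
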